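(* Let $G$ be a complete edge-colored graph such that the quotient graph $G[M]/\mathbb{P}_{\max}(M)$ of each strong prime module $M$ of $G$ is a complete edge-colored permutation graph. Then $G$ is a complete edge-colored permutation graph.
   Context: A complete $k$-edge-colored graph $G=(V,E_1,\dots,E_k)$ is the complete graph on a finite set $V$ with edges partitioned into $k$ nonempty color classes $E_i$ (the one-vertex graph also counts); $G_{|i}=(V,E_i)$. A labeling is a bijection $\ell:V\to\{1,\dots,|V|\}$. A graph $(V,E)$ with labeling $\ell$ is a simple permutation graph of a permutation $\pi$ if for all $u,v$ with $\ell(u)>\ell(v)$: $\{u,v\}\in E$ iff $\pi^{-1}(\ell(u))<\pi^{-1}(\ell(v))$. $G$ is a complete edge-colored permutation graph if there exist a labeling $\ell$ and permutations $\pi_1,\dots,\pi_k$ with $(G_{|i},\ell)$ a simple permutation graph of $\pi_i$ for all $i$. A module is a set $M\subseteq V$ such that for every $v\notin M$ all edges $\{u,v\}$, $u\in M$, have the same color; a strong module is a nonempty module comparable by inclusion or disjoint with every other module. For a strong module $M$ with $|M|\ge2$, $\mathbb{P}_{\max}(M)$ is the set of inclusion-maximal strong modules properly contained in $M$, and $G[M]/\mathbb{P}_{\max}(M)$ is the complete graph on $\mathbb{P}_{\max}(M)$ with $\{M_a,M_b\}$ colored by the common color of all edges between $M_a$ and $M_b$; for $|M|=1$ it is the one-vertex graph. A strong module is series if its quotient graph has at least two vertices and all its edges have one color, and prime otherwise. *)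

theory Defs
  imports Main
begin

text \<open>A complete edge-colored graph is given by a finite nonempty vertex set V and a
  symmetric colouring col of the pairs of distinct vertices; the colour classes are the
  (nonempty) fibres of col over the colours that actually occur.\<close>

definition ceg :: "'a set \<Rightarrow> ('a \<Rightarrow> 'a \<Rightarrow> 'c) \<Rightarrow> bool" where
  "ceg V col \<longleftrightarrow> finite V \<and> V \<noteq> {} \<and>
     (\<forall>u\<in>V. \<forall>v\<in>V. u \<noteq> v \<longrightarrow> col u v = col v u)"

definition colors :: "'a set \<Rightarrow> ('a \<Rightarrow> 'a \<Rightarrow> 'c) \<Rightarrow> 'c set" where
  "colors V col = {col u v | u v. u \<in> V \<and> v \<in> V \<and> u \<noteq> v}"

definition is_labeling :: "'a set \<Rightarrow> ('a \<Rightarrow> nat) \<Rightarrow> bool" where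
  "is_labeling V l \<longleftrightarrow> bij_betw l V {1..card V}"

definition simple_perm_graph ::
  "'a set \<Rightarrow> ('a \<Rightarrow> 'a \<Rightarrow> bool) \<Rightarrow> ('a \<Rightarrow> nat) \<Rightarrow> (nat \<Rightarrow> nat) \<Rightarrow> bool" where
  "simple_perm_graph V E l \<pi> \<longleftrightarrow>
     bij_betw \<pi> {1..card V} {1..card V} \<and>
     (\<forall>u\<in>V. \<forall>v\<in>V. l u > l v \<longrightarrow>
        (E u v \<longleftrightarrow> inv_into {1..card V} \<pi> (l u) < inv_into {1..card V} \<pi> (l v)))"

definition cecpg :: "'a set \<Rightarrow> ('a \<Rightarrow> 'a \<Rightarrow> 'c) \<Rightarrow> bool" where
  "cecpg V col \<longleftrightarrow> (\<exists>l. is_labeling V l \<and>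
     (\<forall>c\<in>colors V col. \<exists>\<pi>. simple_perm_graph V (\<lambda>u v. col u v = c) l \<pi>))"

definition module :: "'a set \<Rightarrow> ('a \<Rightarrow> 'a \<Rightarrow> 'c) \<Rightarrow> 'a set \<Rightarrow> bool" where
  "module V col M \<longleftrightarrow> M \<subseteq> V \<and>
     (\<forall>v\<in>V - M. \<forall>u\<in>M. \<forall>u'\<in>M. col u v = col u' v)"

definition strong_module :: "'a set \<Rightarrow> ('a \<Rightarrow> 'a \<Rightarrow> 'c) \<Rightarrow> 'a set \<Rightarrow> bool" where
  "strong_module V col M \<longleftrightarrow> module V col M \<and> M \<noteq> {} \<and>
     (\<forall>M'. module V col M' \<longrightarrow> M \<subseteq> M' \<or> M' \<subseteq> M \<or> M \<inter> M' = {})"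

definition Pmax :: "'a set \<Rightarrow> ('a \<Rightarrow> 'a \<Rightarrow> 'c) \<Rightarrow> 'a set \<Rightarrow> 'a set set" where
  "Pmax V col M = {M'. strong_module V col M' \<and> M' \<subset> M \<and>
     (\<forall>M''. strong_module V col M'' \<and> M'' \<subset> M \<and> M' \<subseteq> M'' \<longrightarrow> M'' = M')}"

definition quot_vertices :: "'a set \<Rightarrow> ('a \<Rightarrow> 'a \<Rightarrow> 'c) \<Rightarrow> 'a set \<Rightarrow> 'a set set" where
  "quot_vertices V col M = (if card M \<ge> 2 then Pmax V col M else {M})"

text \<open>Colour of the quotient edge {A,B}: the common colour of the edges between A and B.\<close>
definition quot_col :: "('a \<Rightarrow> 'a \<Rightarrow> 'c) \<Rightarrow> 'a set \<Rightarrow> 'a set \<Rightarrow> 'c" where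
  "quot_col col A B = col (SOME a. a \<in> A) (SOME b. b \<in> B)"

definition series_module :: "'a set \<Rightarrow> ('a \<Rightarrow> 'a \<Rightarrow> 'c) \<Rightarrow> 'a set \<Rightarrow> bool" where
  "series_module V col M \<longleftrightarrow> strong_module V col M \<and>
     card (quot_vertices V col M) \<ge> 2 \<and>
     card (colors (quot_vertices V col M) (quot_col col)) = 1"

definition prime_module :: "'a set \<Rightarrow> ('a \<Rightarrow> 'a \<Rightarrow> 'c) \<Rightarrow> 'a set \<Rightarrow> bool" where
  "prime_module V col M \<longleftrightarrow> strong_module V col M \<and> \<not> series_module V col M"

end

theory Submission
  imports Defs
begin

definition rep :: "'a set \<Rightarrow> ('a \<Rightarrow> 'a \<Rightarrow> 'c) \<Rightarrow> ('a \<Rightarrow> nat) \<Rightarrow> ('c \<Rightarrow> 'a \<Rightarrow> nat) \<Rightarrow> bool" where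
  "rep V col l p \<longleftrightarrow> inj_on l V \<and> (\<forall>c. inj_on (p c) V) \<and>
     (\<forall>c. \<forall>u\<in>V. \<forall>v\<in>V. l v < l u \<longrightarrow> (col u v = c \<longleftrightarrow> p c u < p c v))"

lemma rank_exists:
  fixes f :: "'a \<Rightarrow> nat"
  assumes fin: "finite V" and inj: "inj_on f V"
  shows "\<exists>g. bij_betw g V {1..card V} \<and> (\<forall>u\<in>V. \<forall>v\<in>V. f u < f v \<longleftrightarrow> g u < g v)"
proof -
  define g where "g u = card {w\<in>V. f w \<le> f u}" for u
  have mono: "g u < g v" if "u \<in> V" "v \<in> V" "f u < f v" for u v
  proof -
    have "v \<in> {w\<in>V. f w \<le> f v}" "v \<notin> {w\<in>V. f w \<le> f u}" using that by auto
    then have ne: "{w\<in>V. f w \<le> f u} \<noteq> {w\<in>V. f w \<le> f v}" by metis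
    have "{w\<in>V. f w \<le> f u} \<subseteq> {w\<in>V. f w \<le> f v}" using that by auto
    then have "{w\<in>V. f w \<le> f u} \<subset> {w\<in>V. f w \<le> f v}" using ne by blast
    then show ?thesis unfolding g_def by (intro psubset_card_mono) (use fin in auto)
  qed
  have iff: "f u < f v \<longleftrightarrow> g u < g v" if "u \<in> V" "v \<in> V" for u v
  proof
    assume "g u < g v"
    show "f u < f v"
    proof (rule ccontr)
      assume "\<not> f u < f v"
      then have "f v < f u \<or> f v = f u" by auto
      then show False
      proof
        assume "f v < f u" then show False using mono[OF that(2,1)] \<open>g u < g v\<close> by auto
      next
        assume "f v = f u" then have "u = v" using inj that by (metis inj_onD)
        then show False using \<open>g u < g v\<close> by auto
      qed
    qed
  qed (use mono that in auto)
  have injg: "inj_on g V"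
  proof (rule inj_onI)
    fix u v assume uv: "u \<in> V" "v \<in> V" "g u = g v"
    then have "\<not> f u < f v" "\<not> f v < f u" using iff by auto
    then have "f u = f v" by auto
    then show "u = v" using inj uv by (metis inj_onD)
  qed
  have range: "g ` V \<subseteq> {1..card V}"
  proof
    fix x assume "x \<in> g ` V"
    then obtain u where u: "u \<in> V" "x = g u" by auto
    have "u \<in> {w\<in>V. f w \<le> f u}" using u by auto
    moreover have "finite {w\<in>V. f w \<le> f u}" using fin by auto
    ultimately have "card {w\<in>V. f w \<le> f u} > 0" using card_gt_0_iff by blast
    then have "g u \<ge> 1" unfolding g_def by simp
    moreover have "g u \<le> card V" unfolding g_def using fin by (intro card_mono) auto
    ultimately show "x \<in> {1..card V}" using u by auto
  qed
  have "card (g ` V) = card {1..card V}" using card_image[OF injg] by simp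
  then have "g ` V = {1..card V}" using range by (intro card_subset_eq) auto
  then have "bij_betw g V {1..card V}" using injg by (simp add: bij_betw_def)
  then show ?thesis using iff by blast
qed

lemma rep_norm:
  assumes fin: "finite M" and r: "rep M col l p"
  shows "\<exists>l' p'. rep M col l' p' \<and> bij_betw l' M {1..card M} \<and> (\<forall>c. bij_betw (p' c) M {1..card M})"
proof -
  from r have il: "inj_on l M" and ip: "\<And>c. inj_on (p c) M" by (auto simp: rep_def)
  obtain gl where gl: "bij_betw gl M {1..card M}" "\<forall>u\<in>M. \<forall>v\<in>M. l u < l v \<longleftrightarrow> gl u < gl v"
    using rank_exists[OF fin il] by blast
  have "\<forall>c. \<exists>g. bij_betw g M {1..card M} \<and> (\<forall>u\<in>M. \<forall>v\<in>M. p c u < p c v \<longleftrightarrow> g u < g v)"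
    using rank_exists[OF fin ip] by blast
  then obtain gp where gp: "\<And>c. bij_betw (gp c) M {1..card M}"
     "\<And>c. \<forall>u\<in>M. \<forall>v\<in>M. p c u < p c v \<longleftrightarrow> gp c u < gp c v"
    by metis
  have "rep M col gl gp"
    unfolding rep_def
  proof (intro conjI allI ballI impI)
    show "inj_on gl M" using gl bij_betw_imp_inj_on by blast
    fix c show "inj_on (gp c) M" using gp bij_betw_imp_inj_on by blast
  next
    fix c u v assume uv: "u \<in> M" "v \<in> M" "gl v < gl u"
    then have "l v < l u" using gl by blast
    then have "col u v = c \<longleftrightarrow> p c u < p c v" using r uv by (auto simp: rep_def)
    then show "col u v = c \<longleftrightarrow> gp c u < gp c v" using gp(2) uv by blast
  qed
  then show ?thesis using gl gp by blast
qed

lemma rep_cecpg: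
  assumes fin: "finite V" and r: "rep V col l p" 
  shows "cecpg V col"
proof -
  obtain l p where r: "rep V col l p" and bl: "bij_betw l V {1..card V}"
    and bp: "\<And>c. bij_betw (p c) V {1..card V}"
    using rep_norm[OF fin r] by blast
  show ?thesis unfolding cecpg_def is_labeling_def
  proof (rule exI[of _ l], intro conjI ballI)
    show "bij_betw l V {1..card V}" by (rule bl)
    fix c
    define \<pi> where "\<pi> i = l (inv_into V (p c) i)" for i
    have bpi: "bij_betw \<pi> {1..card V} {1..card V}"
      unfolding \<pi>_def using bij_betw_trans[OF bij_betw_inv_into[OF bp[of c]] bl]
      by (simp add: comp_def)
    have key: "inv_into {1..card V} \<pi> (l u) = p c u" if "u \<in> V" for u
    proof (rule inv_into_f_eq)
      show "inj_on \<pi> {1..card V}" using bpi bij_betw_imp_inj_on by blast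
      show "p c u \<in> {1..card V}" using bp[of c] that bij_betwE by blast
      show "\<pi> (p c u) = l u" unfolding \<pi>_def
        using bp[of c] that by (metis bij_betw_imp_inj_on inv_into_f_f)
    qed
    show "\<exists>\<pi>. simple_perm_graph V (\<lambda>u v. col u v = c) l \<pi>"
      unfolding simple_perm_graph_def
    proof (rule exI[of _ \<pi>], intro conjI ballI impI)
      show "bij_betw \<pi> {1..card V} {1..card V}" by (rule bpi)
      fix u v assume uv: "u \<in> V" "v \<in> V" "l v < l u"
      then have "col u v = c \<longleftrightarrow> p c u < p c v" using r by (auto simp: rep_def)
      then show "col u v = c \<longleftrightarrow> inv_into {1..card V} \<pi> (l u) < inv_into {1..card V} \<pi> (l v)"
        using key uv by simp
    qed
  qed
qed

lemma cecpg_rep: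
  assumes fin: "finite V" and cp: "cecpg V col"
  shows "\<exists>l p. rep V col l p"
proof -
  obtain l where bl: "bij_betw l V {1..card V}"
    and ex: "\<forall>c\<in>colors V col. \<exists>\<pi>. simple_perm_graph V (\<lambda>u v. col u v = c) l \<pi>"
    using cp unfolding cecpg_def is_labeling_def by blast
  obtain pf where pf: "\<And>c. c \<in> colors V col \<Longrightarrow> simple_perm_graph V (\<lambda>u v. col u v = c) l (pf c)"
    using ex by metis
  define p where "p c = (if c \<in> colors V col then (\<lambda>u. inv_into {1..card V} (pf c) (l u)) else l)" for c
  have "rep V col l p"
    unfolding rep_def
  proof (intro conjI allI ballI impI)
    show il: "inj_on l V" using bl bij_betw_imp_inj_on by blast
    fix c
    show "inj_on (p c) V"
    proof (cases "c \<in> colors V col")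
      case True
      then have bpi: "bij_betw (pf c) {1..card V} {1..card V}" using pf simple_perm_graph_def by blast
      have "inj_on (inv_into {1..card V} (pf c)) (l ` V)"
        using bl bpi by (intro inj_on_inv_into) (simp add: bij_betw_def)
      then show ?thesis using True il unfolding p_def by (simp add: comp_inj_on[OF il, unfolded comp_def])
    next
      case False then show ?thesis using il unfolding p_def by simp
    qed
  next
    fix c u v assume uv: "u \<in> V" "v \<in> V" "l v < l u"
    show "col u v = c \<longleftrightarrow> p c u < p c v"
    proof (cases "c \<in> colors V col")
      case True
      then show ?thesis using pf[OF True] uv unfolding simple_perm_graph_def p_def by auto
    next
      case False
      have "u \<noteq> v" using uv by auto
      then have "col u v \<in> colors V col" using uv unfolding colors_def by blast
      then show ?thesis using False uv unfolding p_def by auto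
    qed
  qed
  then show ?thesis by blast
qed

lemma series_rep:
  assumes fin: "finite Q" and mono: "\<And>A B. A \<in> Q \<Longrightarrow> B \<in> Q \<Longrightarrow> A \<noteq> B \<Longrightarrow> qc A B = c0"
  shows "\<exists>l p. rep Q qc l p"
proof -
  obtain l :: "'a \<Rightarrow> nat" and n where ln: "l ` Q = {i. i < n}" "inj_on l Q"
    using finite_imp_inj_to_nat_seg[OF fin] by blast
  define p where "p c = (if c = c0 then (\<lambda>A. n - l A) else l)" for c
  have "rep Q qc l p"
    unfolding rep_def
  proof (intro conjI allI ballI impI)
    show "inj_on l Q" by (rule ln(2))
    fix c show "inj_on (p c) Q"
    proof (cases "c = c0")
      case True
      show ?thesis unfolding p_def using True
      proof (simp, intro inj_onI)
        fix A B assume AB: "A \<in> Q" "B \<in> Q" "n - l A = n - l B"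
        have "l A < n" "l B < n" using AB ln(1) by auto
        then have "l A = l B" using AB by linarith
        then show "A = B" using ln(2) AB inj_onD by metis
      qed
    next
      case False then show ?thesis using ln(2) unfolding p_def by simp
    qed
  next
    fix c A B assume AB: "A \<in> Q" "B \<in> Q" "l B < l A"
    then have "A \<noteq> B" by auto
    then have q: "qc A B = c0" using mono AB by blast
    have "l A < n" "l B < n" using AB ln(1) by auto
    then show "qc A B = c \<longleftrightarrow> p c A < p c B" using q AB unfolding p_def by auto
  qed
  then show ?thesis by blast
qed

lemma singleton_strong: "x \<in> V \<Longrightarrow> strong_module V col {x}"
  unfolding strong_module_def module_def by auto

lemma pmax_cover:
  assumes fin: "finite V" and sm: "strong_module V col M" and c2: "card M \<ge> 2" and x: "x \<in> M"
  shows "\<exists>A\<in>Pmax V col M. x \<in> A"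
proof -
  define S where "S = {A. strong_module V col A \<and> A \<subset> M \<and> x \<in> A}"
  have MV: "M \<subseteq> V" using sm unfolding strong_module_def module_def by auto
  have "{x} \<noteq> M" using c2 by auto
  then have xS: "{x} \<in> S" unfolding S_def using x MV singleton_strong[of x V col] by auto
  have "S \<subseteq> Pow V" unfolding S_def using MV by auto
  moreover have "finite (Pow V)" using fin by simp
  ultimately have finS: "finite S" by (rule finite_subset)
  define m where "m = Max (card ` S)"
  have "m \<in> card ` S" unfolding m_def using finS xS by (intro Max_in) auto
  then obtain A where A: "A \<in> S" "card A = m" by auto
  have maxA: "card B \<le> card A" if "B \<in> S" for B
    using A finS that unfolding m_def by (auto intro: Max_ge)
  have "A \<in> Pmax V col M"
    unfolding Pmax_def
  proof (intro CollectI conjI allI impI)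
    show "strong_module V col A" "A \<subset> M" using A unfolding S_def by auto
    fix M'' assume H: "strong_module V col M'' \<and> M'' \<subset> M \<and> A \<subseteq> M''"
    then have "M'' \<in> S" using A unfolding S_def by auto
    then have "card M'' \<le> card A" by (rule maxA)
    moreover have fM: "finite M''" using H MV fin by (meson finite_subset psubset_imp_subset)
    moreover have "card A \<le> card M''" using fM H by (intro card_mono) auto
    ultimately have "card A = card M''" by simp
    then show "M'' = A" using H fM card_subset_eq[of M'' A] by auto
  qed
  then show ?thesis using A unfolding S_def by blast
qed

lemma pmax_disj:
  assumes A: "A \<in> Pmax V col M" and B: "B \<in> Pmax V col M" and x: "x \<in> A" "x \<in> B"
  shows "A = B"
proof -
  have sA: "strong_module V col A" "A \<subset> M" and sB: "strong_module V col B" "B \<subset> M"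
    using A B unfolding Pmax_def by auto
  have "A \<subseteq> B \<or> B \<subseteq> A \<or> A \<inter> B = {}"
    using sA(1) sB(1) unfolding strong_module_def by simp
  then show ?thesis
  proof (elim disjE)
    assume "A \<subseteq> B"
    moreover have "\<forall>M''. strong_module V col M'' \<and> M'' \<subset> M \<and> A \<subseteq> M'' \<longrightarrow> M'' = A"
      using A unfolding Pmax_def by simp
    ultimately show ?thesis using sB by metis
  next
    assume "B \<subseteq> A"
    moreover have "\<forall>M''. strong_module V col M'' \<and> M'' \<subset> M \<and> B \<subseteq> M'' \<longrightarrow> M'' = B"
      using B unfolding Pmax_def by simp
    ultimately show ?thesis using sA by metis
  next
    assume "A \<inter> B = {}" then show ?thesis using x by blast
  qed
qed

lemma quot_col_eq:
  assumes cg: "ceg V col" and mA: "module V col A" and mB: "module V col B"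
    and d: "A \<inter> B = {}" and u: "u \<in> A" and v: "v \<in> B"
  shows "col u v = quot_col col A B"
proof -
  define a where "a = (SOME a. a \<in> A)"
  define b where "b = (SOME b. b \<in> B)"
  have a: "a \<in> A" unfolding a_def using u by (rule someI)
  have b: "b \<in> B" unfolding b_def using v by (rule someI)
  have AV: "A \<subseteq> V" and BV: "B \<subseteq> V" using mA mB unfolding module_def by auto
  have "v \<in> V - A" using v d BV by auto
  then have 1: "col u v = col a v" using mA u a unfolding module_def by blast
  have "a \<in> V - B" using a d AV by auto
  then have 2: "col v a = col b a" using mB v b unfolding module_def by blast
  have sym: "\<And>x y. x \<in> V \<Longrightarrow> y \<in> V \<Longrightarrow> x \<noteq> y \<Longrightarrow> col x y = col y x"
    using cg unfolding ceg_def by blast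
  have "col a v = col v a" using sym a v AV BV d by blast
  moreover have "col b a = col a b" using sym a b AV BV d by blast
  ultimately show ?thesis using 1 2 unfolding quot_col_def a_def b_def by simp
qed

lemma lex_less:
  fixes x y a b K :: nat
  assumes "a < K" "b < K"
  shows "x * K + a < y * K + b \<longleftrightarrow> x < y \<or> (x = y \<and> a < b)"
proof -
  have *: "x * K + a < y * K + b" if "x < y" "a < K" for x y a b :: nat
  proof -
    have "x * K + a < (x + 1) * K" using that by simp
    also have "\<dots> \<le> y * K" using that by (intro mult_right_mono) auto
    finally show ?thesis by simp
  qed
  show ?thesis
  proof
    assume h: "x * K + a < y * K + b"
    show "x < y \<or> (x = y \<and> a < b)"
    proof (cases "x < y")
      case False
      then have "y < x \<or> y = x" by auto
      then show ?thesis using *[of y x b a] h assms by auto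
    qed simp
  next
    assume "x < y \<or> (x = y \<and> a < b)"
    then show "x * K + a < y * K + b" using * assms by auto
  qed
qed

lemma lex_eq:
  fixes x y a b K :: nat
  assumes "a < K" "b < K" "x * K + a = y * K + b"
  shows "x = y \<and> a = b"
proof -
  have "\<not> x * K + a < y * K + b" "\<not> y * K + b < x * K + a" using assms by auto
  then show ?thesis using lex_less[OF assms(1,2), of x y] lex_less[OF assms(2,1), of y x] by auto
qed

lemma main_rep:
  assumes cg: "ceg V col"
    and pr: "\<And>M. prime_module V col M \<Longrightarrow> cecpg (quot_vertices V col M) (quot_col col)"
  shows "strong_module V col M \<Longrightarrow> \<exists>l p. rep M col l p"
proof (induction "card M" arbitrary: M rule: less_induct)
  case less
  have finV: "finite V" using cg unfolding ceg_def by simp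
  have MV: "M \<subseteq> V" using less.prems unfolding strong_module_def module_def by auto
  have fin: "finite M" using MV finV finite_subset by blast
  have Mne: "M \<noteq> {}" using less.prems unfolding strong_module_def by simp
  show ?case
  proof (cases "card M \<ge> 2")
    case False
    then have "card M = 1" using Mne fin by (metis One_nat_def Suc_1 card_0_eq le_SucE less_2_cases_iff not_le)
    then obtain x where x: "M = {x}" by (rule card_1_singletonE)
    have "rep M col (\<lambda>_. 0) (\<lambda>_ _. 0)" unfolding rep_def x by simp
    then show ?thesis by blast
  next
    case True
    define Q where "Q = Pmax V col M"
    have Qs: "strong_module V col A" "A \<subset> M" if "A \<in> Q" for A
      using that unfolding Q_def Pmax_def by auto
    have Qm: "module V col A" if "A \<in> Q" for A using Qs[OF that] unfolding strong_module_def by simp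
    have cardA: "card A < card M" if "A \<in> Q" for A using Qs[OF that] fin by (simp add: psubset_card_mono)
    have finA: "finite A" if "A \<in> Q" for A using Qs[OF that] fin by (meson finite_subset psubset_imp_subset)
    have "\<forall>A\<in>Q. \<exists>l p. rep A col l p \<and> bij_betw l A {1..card A} \<and> (\<forall>c. bij_betw (p c) A {1..card A})"
    proof
      fix A assume A: "A \<in> Q"
      obtain l p where "rep A col l p" using less.hyps[OF cardA[OF A] Qs(1)[OF A]] by blast
      then show "\<exists>l p. rep A col l p \<and> bij_betw l A {1..card A} \<and> (\<forall>c. bij_betw (p c) A {1..card A})"
        using rep_norm[OF finA[OF A]] by blast
    qed
    then obtain LA PA where LP: "\<And>A. A \<in> Q \<Longrightarrow> rep A col (LA A) (PA A) \<and> bij_betw (LA A) A {1..card A}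
        \<and> (\<forall>c. bij_betw (PA A c) A {1..card A})"
      by metis
    define K where "K = Suc (card M)"
    have LAb: "LA A u < K" if "A \<in> Q" "u \<in> A" for A u
    proof -
      have "LA A u \<in> {1..card A}" using LP[OF that(1)] that(2) bij_betwE by blast
      then show ?thesis using cardA[OF that(1)] unfolding K_def by auto
    qed
    have PAb: "PA A c u < K" if "A \<in> Q" "u \<in> A" for A u c
    proof -
      have "PA A c u \<in> {1..card A}" using LP[OF that(1)] that(2) bij_betwE by blast
      then show ?thesis using cardA[OF that(1)] unfolding K_def by auto
    qed
    have repA: "rep A col (LA A) (PA A)" if "A \<in> Q" for A using LP[OF that] by blast
    have finQ: "finite Q"
    proof -
      have "Q \<subseteq> Pow V" using Qs MV by blast
      moreover have "finite (Pow V)" using finV by simp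
      ultimately show ?thesis by (rule finite_subset)
    qed
    have qv: "quot_vertices V col M = Q" unfolding quot_vertices_def Q_def using True by simp
    obtain LQ PQ where repQ: "rep Q (quot_col col) LQ PQ"
    proof (cases "prime_module V col M")
      case True
      then show ?thesis using that cecpg_rep[OF finQ] pr[OF True] qv by metis
    next
      case False
      then have sm: "series_module V col M" using less.prems unfolding prime_module_def by simp
      then have "card (colors Q (quot_col col)) = 1" using qv unfolding series_module_def by simp
      then obtain c0 where c0: "colors Q (quot_col col) = {c0}" by (rule card_1_singletonE)
      have "quot_col col A B = c0" if "A \<in> Q" "B \<in> Q" "A \<noteq> B" for A B
      proof -
        have "quot_col col A B \<in> colors Q (quot_col col)" using that unfolding colors_def by blast
        then show ?thesis using c0 by simp
      qed
      then show ?thesis using that series_rep[OF finQ] by metis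
    qed
    define blk where "blk u = (THE A. A \<in> Q \<and> u \<in> A)" for u
    have blk: "blk u \<in> Q \<and> u \<in> blk u" if uM: "u \<in> M" for u
    proof -
      obtain A where A: "A \<in> Q" "u \<in> A" using pmax_cover[OF finV less.prems True uM] Q_def by blast
      have "\<exists>!A. A \<in> Q \<and> u \<in> A" using A pmax_disj unfolding Q_def by metis
      then show ?thesis unfolding blk_def by (rule theI')
    qed
    have blkU: "blk u = A" if "A \<in> Q" "u \<in> A" for u A
    proof -
      have uM: "u \<in> M" using Qs(2)[OF that(1)] that(2) by blast
      show ?thesis using blk[OF uM] that pmax_disj unfolding Q_def by metis
    qed
    have injLQ: "inj_on LQ Q" and injPQ: "\<And>c. inj_on (PQ c) Q" using repQ unfolding rep_def by auto
    define L where "L u = LQ (blk u) * K + LA (blk u) u" for u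
    define P where "P c u = PQ c (blk u) * K + PA (blk u) c u" for c u
    have "rep M col L P"
      unfolding rep_def
    proof (intro conjI allI ballI impI)
      show "inj_on L M"
      proof (rule inj_onI)
        fix u v assume uv: "u \<in> M" "v \<in> M" "L u = L v"
        have "LQ (blk u) = LQ (blk v) \<and> LA (blk u) u = LA (blk v) v"
          using lex_eq[OF LAb LAb] blk uv unfolding L_def by blast
        then have e: "blk u = blk v" "LA (blk u) u = LA (blk u) v"
          using injLQ blk uv inj_onD by metis+
        have "inj_on (LA (blk u)) (blk u)" using repA blk uv unfolding rep_def by blast
        then show "u = v" using e blk uv inj_onD by metis
      qed
    next
      fix c
      show "inj_on (P c) M"
      proof (rule inj_onI)
        fix u v assume uv: "u \<in> M" "v \<in> M" "P c u = P c v"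
        have "PQ c (blk u) = PQ c (blk v) \<and> PA (blk u) c u = PA (blk v) c v"
          using lex_eq[OF PAb PAb] blk uv unfolding P_def by blast
        then have e: "blk u = blk v" "PA (blk u) c u = PA (blk u) c v"
          using injPQ blk uv inj_onD by metis+
        have "inj_on (PA (blk u) c) (blk u)" using repA blk uv unfolding rep_def by blast
        then show "u = v" using e blk uv inj_onD by metis
      qed
    next
      fix c u v assume uv: "u \<in> M" "v \<in> M" "L v < L u"
      have bu: "blk u \<in> Q" "u \<in> blk u" and bv: "blk v \<in> Q" "v \<in> blk v" using blk uv by auto
      have Llex: "LQ (blk v) < LQ (blk u) \<or> (LQ (blk v) = LQ (blk u) \<and> LA (blk v) v < LA (blk u) u)"
        using uv(3) lex_less[OF LAb[OF bv] LAb[OF bu]] unfolding L_def by blast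
      have Plex: "P c u < P c v \<longleftrightarrow> PQ c (blk u) < PQ c (blk v) \<or> (PQ c (blk u) = PQ c (blk v) \<and> PA (blk u) c u < PA (blk v) c v)"
        using lex_less[OF PAb[OF bu] PAb[OF bv]] unfolding P_def by blast
      show "col u v = c \<longleftrightarrow> P c u < P c v"
      proof (cases "blk u = blk v")
        case True
        then have "LA (blk u) v < LA (blk u) u" using Llex by auto
        then have "col u v = c \<longleftrightarrow> PA (blk u) c u < PA (blk u) c v"
          using repA[OF bu(1)] bu bv True unfolding rep_def by metis
        then show ?thesis using Plex True by auto
      next
        case False
        then have "LQ (blk v) \<noteq> LQ (blk u)" using injLQ bu bv inj_onD by metis
        then have lq: "LQ (blk v) < LQ (blk u)" using Llex by auto
        have pq: "PQ c (blk u) \<noteq> PQ c (blk v)" using False injPQ bu bv inj_onD by metis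
        have d: "blk u \<inter> blk v = {}"
        proof (rule ccontr)
          assume "blk u \<inter> blk v \<noteq> {}"
          then obtain x where "x \<in> blk u" "x \<in> blk v" by blast
          then show False using False bu(1) bv(1) pmax_disj[of "blk u" V col M "blk v" x] unfolding Q_def by blast
        qed
        have "col u v = quot_col col (blk u) (blk v)"
          using quot_col_eq[OF cg Qm[OF bu(1)] Qm[OF bv(1)] d bu(2) bv(2)] .
        moreover have "quot_col col (blk u) (blk v) = c \<longleftrightarrow> PQ c (blk u) < PQ c (blk v)"
          using repQ bu bv lq unfolding rep_def by blast
        ultimately show ?thesis using Plex pq by auto
      qed
    qed
    then show ?thesis by blast
  qed
qed

theorem proposition4p10:
  fixes V :: "'a set" and col :: "'a \<Rightarrow> 'a \<Rightarrow> 'c"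
  assumes "ceg V col"
    and "\<And>M. prime_module V col M \<Longrightarrow>
           cecpg (quot_vertices V col M) (quot_col col)"
  shows "cecpg V col"
proof -
  have fin: "finite V" and ne: "V \<noteq> {}" using assms(1) unfolding ceg_def by auto
  have "strong_module V col V" using ne unfolding strong_module_def module_def by auto
  then obtain l p where "rep V col l p" using main_rep[OF assms] by blast
  then show ?thesis using rep_cecpg[OF fin] by blast
qed

end
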